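(* Let $P\neq Q$ be points in $\mathbb{R}^3$ and let $\gamma:[0,T)\times[0,1]\to\mathbb{R}^3$ be a sufficiently smooth family of curves with $|\gamma_u|_g\neq0$ everywhere, $\gamma(0,\cdot)$ a regular horizontal curve from $P$ to $Q$, $\gamma(t,0)=P$, $\gamma(t,1)=Q$ for all $t$, and $$\gamma_t(t,u)=\vec k_g(t,u)+\lambda(t)N(t,u)-\Big(\int_0^u(k(t,\xi)+\lambda(t))|\gamma_u(t,\xi)|_gd\xi\Big)X_3(\gamma(t,u))$$ for $(t,u)\in(0,T)\times(0,1)$, where $\lambda(t)=-\frac{\int_0^1k(t,u)|\gamma_u(t,u)|_gdu}{L(\gamma(t))}$. Then $t\mapsto L(\gamma(t))$ is nonincreasing.
   Context: Write $\gamma=(\gamma^1,\gamma^2,\gamma^3)^t$. $|\gamma_u|_g=\sqrt{(\gamma^1_u)^2+(\gamma^2_u)^2}$ and $L(\gamma)=\int_0^1|\gamma_u|_gdu$. A curve is horizontal if $\gamma^3_u=-\tfrac12\gamma^2\gamma^1_u+\tfrac12\gamma^1\gamma^2_u$. $X_3=(0,0,1)^t$. $k=\frac{\gamma^2_{uu}\gamma^1_u-\gamma^2_u\gamma^1_{uu}}{((\gamma^1_u)^2+(\gamma^2_u)^2)^{3/2}}$, $N=\frac1{|\gamma_u|_g}\big(-\gamma^2_u,\ \gamma^1_u,\ \tfrac12\gamma^2\gamma^2_u+\tfrac12\gamma^1\gamma^1_u\big)^t$, and $\vec k_g=kN$. *)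

theory Defs
  imports "HOL-Analysis.Analysis"
begin

definition gnorm :: "real^3 \<Rightarrow> real" where
  "gnorm v = sqrt ((v$1)^2 + (v$2)^2)"

definition cderiv :: "(real \<Rightarrow> real^3) \<Rightarrow> real \<Rightarrow> real^3" where
  "cderiv c u = vector_derivative c (at u within {0..1})"

definition Lg :: "(real \<Rightarrow> real^3) \<Rightarrow> real" where
  "Lg c = integral {0..1} (\<lambda>u. gnorm (cderiv c u))"

definition horizontal :: "(real \<Rightarrow> real^3) \<Rightarrow> bool" where
  "horizontal c \<longleftrightarrow> (\<forall>u\<in>{0..1}. c differentiable (at u within {0..1}) \<and>
      (cderiv c u)$3 = - (1/2) * (c u)$2 * (cderiv c u)$1 + (1/2) * (c u)$1 * (cderiv c u)$2)"

definition regular_curve :: "(real \<Rightarrow> real^3) \<Rightarrow> bool" where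
  "regular_curve c \<longleftrightarrow> (\<forall>u\<in>{0..1}. c differentiable (at u within {0..1}) \<and> cderiv c u \<noteq> 0)"

definition X3 :: "real^3" where
  "X3 = vector [0, 0, 1]"

text \<open>Curvature k from the first and second u-derivatives v = gamma_u, a = gamma_uu.\<close>
definition kcurv :: "real^3 \<Rightarrow> real^3 \<Rightarrow> real" where
  "kcurv v a = (a$2 * v$1 - v$2 * a$1) / ((v$1)^2 + (v$2)^2) powr (3/2)"

text \<open>Normal N at point p with tangent v = gamma_u.\<close>
definition Nvec :: "real^3 \<Rightarrow> real^3 \<Rightarrow> real^3" where
  "Nvec p v = (1 / gnorm v) *\<^sub>R vector [- v$2, v$1, (1/2) * p$2 * v$2 + (1/2) * p$1 * v$1]"

definition kgvec :: "real^3 \<Rightarrow> real^3 \<Rightarrow> real^3 \<Rightarrow> real^3" where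
  "kgvec p v a = kcurv v a *\<^sub>R Nvec p v"

end

theory Submission
  imports Defs
begin
lemma powr32: "S>(0::real) \<Longrightarrow> S powr (3/2) = S * sqrt S"
proof -
  assume "S > 0"
  have "S powr (3/2) = S powr (1 + 1/2)" by simp
  also have "\<dots> = S powr 1 * S powr (1/2)" by (rule powr_add)
  finally show ?thesis using \<open>S>0\<close> by (simp add: powr_half_sqrt)
qed

lemma comp_deriv: "(f has_vector_derivative f') F \<Longrightarrow> ((\<lambda>x. f x $ i) has_real_derivative f' $ i) F"
  using bounded_linear.has_vector_derivative[OF bounded_linear_vec_nth, of f f' F i]
  by (simp add: has_real_derivative_iff_has_vector_derivative)

lemma restr:
  assumes "continuous_on (A \<times> B) (\<lambda>(t,u). F t u)" "t \<in> A"
  shows "continuous_on B (F t)"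
proof -
  have "continuous_on B (\<lambda>u. (\<lambda>(t,u). F t u) (t, u))"
    by (rule continuous_on_compose2[OF assms(1)]) (use assms(2) in \<open>auto intro!: continuous_intros\<close>)
  then show ?thesis by simp
qed

theorem lemmaB3:
  fixes P Q :: "real^3" and T :: real
    and \<gamma> \<gamma>u \<gamma>uu \<gamma>t \<gamma>ut :: "real \<Rightarrow> real \<Rightarrow> real^3"
  assumes PQ: "P \<noteq> Q"
    and d_u: "\<And>t u. t \<in> {0..<T} \<Longrightarrow> u \<in> {0..1} \<Longrightarrow>
               ((\<lambda>u. \<gamma> t u) has_vector_derivative \<gamma>u t u) (at u within {0..1})"
    and d_uu: "\<And>t u. t \<in> {0..<T} \<Longrightarrow> u \<in> {0..1} \<Longrightarrow>
               ((\<lambda>u. \<gamma>u t u) has_vector_derivative \<gamma>uu t u) (at u within {0..1})"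
    and d_t: "\<And>t u. t \<in> {0..<T} \<Longrightarrow> u \<in> {0..1} \<Longrightarrow>
               ((\<lambda>t. \<gamma> t u) has_vector_derivative \<gamma>t t u) (at t within {0..<T})"
    and d_ut: "\<And>t u. t \<in> {0..<T} \<Longrightarrow> u \<in> {0..1} \<Longrightarrow>
               ((\<lambda>t. \<gamma>u t u) has_vector_derivative \<gamma>ut t u) (at t within {0..<T})"
    and d_tu: "\<And>t u. t \<in> {0..<T} \<Longrightarrow> u \<in> {0..1} \<Longrightarrow>
               ((\<lambda>u. \<gamma>t t u) has_vector_derivative \<gamma>ut t u) (at u within {0..1})"
    and c0: "continuous_on ({0..<T} \<times> {0..1}) (\<lambda>(t, u). \<gamma> t u)"
    and c1: "continuous_on ({0..<T} \<times> {0..1}) (\<lambda>(t, u). \<gamma>u t u)"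
    and c2: "continuous_on ({0..<T} \<times> {0..1}) (\<lambda>(t, u). \<gamma>uu t u)"
    and c3: "continuous_on ({0..<T} \<times> {0..1}) (\<lambda>(t, u). \<gamma>t t u)"
    and c4: "continuous_on ({0..<T} \<times> {0..1}) (\<lambda>(t, u). \<gamma>ut t u)"
    and nondeg: "\<And>t u. t \<in> {0..<T} \<Longrightarrow> u \<in> {0..1} \<Longrightarrow> gnorm (\<gamma>u t u) \<noteq> 0"
    and init_reg: "regular_curve (\<gamma> 0)"
    and init_hor: "horizontal (\<gamma> 0)"
    and bdry: "\<And>t. t \<in> {0..<T} \<Longrightarrow> \<gamma> t 0 = P \<and> \<gamma> t 1 = Q"
    and flow: "\<And>t u. t \<in> {0<..<T} \<Longrightarrow> u \<in> {0<..<1} \<Longrightarrow>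
       (let lam = - integral {0..1} (\<lambda>u. kcurv (\<gamma>u t u) (\<gamma>uu t u) * gnorm (\<gamma>u t u)) / Lg (\<gamma> t)
        in \<gamma>t t u = kgvec (\<gamma> t u) (\<gamma>u t u) (\<gamma>uu t u) + lam *\<^sub>R Nvec (\<gamma> t u) (\<gamma>u t u)
             - integral {0..u} (\<lambda>\<xi>. (kcurv (\<gamma>u t \<xi>) (\<gamma>uu t \<xi>) + lam) * gnorm (\<gamma>u t \<xi>)) *\<^sub>R X3)"
  shows "\<forall>s\<in>{0..<T}. \<forall>t\<in>{0..<T}. s \<le> t \<longrightarrow> Lg (\<gamma> t) \<le> Lg (\<gamma> s)"
proof -
  define G where "G t u = gnorm (\<gamma>u t u)" for t u
  define K where "K t u = kcurv (\<gamma>u t u) (\<gamma>uu t u)" for t u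
  define fx where "fx t u = (\<gamma>u t u $1 * \<gamma>ut t u $1 + \<gamma>u t u $2 * \<gamma>ut t u $2) / G t u" for t u
  have Gpos: "G t u > 0" if "t \<in> {0..<T}" "u \<in> {0..1}" for t u
  proof -
    have "gnorm (\<gamma>u t u) \<ge> 0" unfolding gnorm_def by simp
    then show ?thesis using nondeg[OF that] unfolding G_def by simp
  qed
  have Gcont: "continuous_on {0..1} (G t)" if "t \<in> {0..<T}" for t
    unfolding G_def gnorm_def
    using restr[OF c1 that] by (auto intro!: continuous_intros)
  have Lg_eq: "Lg (\<gamma> t) = integral {0..1} (G t)" if "t \<in> {0..<T}" for t
    unfolding Lg_def cderiv_def G_def
    by (rule integral_cong) (use vector_derivative_within_closed_interval[OF _ _ d_u[OF that]] in auto)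
  have dG: "((\<lambda>t. G t u) has_real_derivative fx t u) (at t within {0..<T})"
    if "t \<in> {0..<T}" "u \<in> {0..1}" for t u
  proof -
    have a: "((\<lambda>t. \<gamma>u t u $ i) has_real_derivative \<gamma>ut t u $ i) (at t within {0..<T})" for i
      by (rule comp_deriv[OF d_ut[OF that]])
    define S where "S = (\<gamma>u t u $ 1)\<^sup>2 + (\<gamma>u t u $ 2)\<^sup>2"
    have GS: "G t u = sqrt S" unfolding S_def G_def gnorm_def by simp
    have Sp: "S > 0" using Gpos[OF that] GS by simp
    have dS: "((\<lambda>x. (\<gamma>u x u $ 1)\<^sup>2 + (\<gamma>u x u $ 2)\<^sup>2) has_real_derivative
        (2 * \<gamma>u t u $ 1 * \<gamma>ut t u $ 1 + 2 * \<gamma>u t u $ 2 * \<gamma>ut t u $ 2)) (at t within {0..<T})"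
      by (rule derivative_eq_intros a refl | simp)+
    have "((\<lambda>x. sqrt ((\<gamma>u x u $ 1)\<^sup>2 + (\<gamma>u x u $ 2)\<^sup>2)) has_real_derivative
        (inverse (sqrt S) / 2) * (2 * \<gamma>u t u $ 1 * \<gamma>ut t u $ 1 + 2 * \<gamma>u t u $ 2 * \<gamma>ut t u $ 2)) (at t within {0..<T})"
      by (rule DERIV_chain2[OF _ dS]) (use DERIV_real_sqrt[OF Sp] S_def in simp)
    moreover have eq: "(inverse (sqrt S) / 2) * (2 * \<gamma>u t u $ 1 * \<gamma>ut t u $ 1 + 2 * \<gamma>u t u $ 2 * \<gamma>ut t u $ 2) = fx t u"
      unfolding fx_def GS using Sp by (simp add: field_simps)
    ultimately show ?thesis
      unfolding G_def gnorm_def by simp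
  qed
  have Gpos2: "(\<gamma>u t u $ 1)\<^sup>2 + (\<gamma>u t u $ 2)\<^sup>2 \<noteq> 0" if "(t,u) \<in> {0..<T} \<times> {0..1}" for t u
    using Gpos[of t u] that unfolding G_def gnorm_def by auto
  have fxcont: "continuous_on ({0..<T} \<times> {0..1}) (\<lambda>(t, u). fx t u)"
    unfolding fx_def G_def gnorm_def split_beta
    using c1 c4 Gpos2 unfolding split_beta
    by (auto intro!: continuous_intros)
  have dL: "((\<lambda>t. integral {0..1} (G t)) has_real_derivative integral {0..1} (fx t)) (at t within {0..<T})"
    if "t \<in> {0..<T}" for t
    using leibniz_rule_field_derivative[of "{0..<T}" 0 1 G fx t] dG fxcont that Gcont
    by (auto simp: integrable_continuous_interval)
  have Dle: "integral {0..1} (fx t) \<le> 0" if tT: "t \<in> {0<..<T}" for t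
  proof -
    have t0: "t \<in> {0..<T}" using tT by auto
    define L where "L = integral {0..1} (G t)"
    define B where "B = integral {0..1} (\<lambda>u. K t u * G t u)"
    define c where "c = B / L"
    have Kcont: "continuous_on {0..1} (K t)"
      unfolding K_def kcurv_def
      using restr[OF c1 t0] restr[OF c2 t0] Gpos2 t0
      by (auto intro!: continuous_intros)
    obtain m where m: "m \<in> {0..1}" "\<And>y. y \<in> {0..1} \<Longrightarrow> G t m \<le> G t y"
      using continuous_attains_inf[OF compact_Icc _ Gcont[OF t0]] by auto
    have "G t m \<le> L"
      unfolding L_def
      using integral_le[of "\<lambda>u. G t m" "{0..1}" "G t"] m Gcont[OF t0]
      by (auto simp: integrable_continuous_interval)
    then have Lpos: "L > 0" using Gpos[OF t0 m(1)] by simp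
    have flow': "\<gamma>t t v = kgvec (\<gamma> t v) (\<gamma>u t v) (\<gamma>uu t v) + (- c) *\<^sub>R Nvec (\<gamma> t v) (\<gamma>u t v)
             - integral {0..v} (\<lambda>\<xi>. (K t \<xi> + (- c)) * G t \<xi>) *\<^sub>R X3" if "v \<in> {0<..<1}" for v
    proof -
      have "- integral {0..1} (\<lambda>u. kcurv (\<gamma>u t u) (\<gamma>uu t u) * gnorm (\<gamma>u t u)) / Lg (\<gamma> t) = - c"
        unfolding c_def B_def L_def Lg_eq[OF t0] K_def G_def by simp
      then show ?thesis using flow[OF tT that] unfolding Let_def K_def G_def by simp
    qed
    have e12: "\<gamma>t t v $ 1 = (K t v - c) * (- \<gamma>u t v $ 2) / G t v \<and> \<gamma>t t v $ 2 = (K t v - c) * (\<gamma>u t v $ 1) / G t v"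
      if "v \<in> {0<..<1}" for v
    proof -
      have gz: "gnorm (\<gamma>u t v) \<noteq> 0" using Gpos[OF t0, of v] that unfolding G_def by auto
      show ?thesis
        unfolding flow'[OF that] unfolding kgvec_def Nvec_def X3_def K_def G_def
        using gz by (simp add: field_simps)
    qed
    define \<phi> where "\<phi> v = \<gamma>u t v $ 1 * \<gamma>t t v $ 1 + \<gamma>u t v $ 2 * \<gamma>t t v $ 2" for v
    have orth: "\<phi> v = 0" if "v \<in> {0<..<1}" for v
    proof -
      have "G t v > 0" using Gpos[OF t0, of v] that by auto
      have "\<phi> v = \<gamma>u t v $ 1 * ((K t v - c) * (- \<gamma>u t v $ 2) / G t v) + \<gamma>u t v $ 2 * ((K t v - c) * (\<gamma>u t v $ 1) / G t v)"
        unfolding \<phi>_def using e12[OF that] by simp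
      also have "\<dots> = 0" using \<open>G t v > 0\<close> by (simp add: field_simps)
      finally show ?thesis .
    qed
    have pt: "fx t u = - ((K t u - c) * K t u * G t u)" if u: "u \<in> {0<..<1}" for u
    proof -
      have u': "u \<in> {0..1}" using u by auto
      define D where "D = \<gamma>uu t u $ 1 * \<gamma>t t u $ 1 + \<gamma>u t u $ 1 * \<gamma>ut t u $ 1
         + (\<gamma>uu t u $ 2 * \<gamma>t t u $ 2 + \<gamma>u t u $ 2 * \<gamma>ut t u $ 2)"
      have a: "((\<lambda>v. \<gamma>u t v $ i) has_real_derivative \<gamma>uu t u $ i) (at u within {0..1})" for i
        by (rule comp_deriv[OF d_uu[OF t0 u']])
      have b: "((\<lambda>v. \<gamma>t t v $ i) has_real_derivative \<gamma>ut t u $ i) (at u within {0..1})" for i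
        by (rule comp_deriv[OF d_tu[OF t0 u']])
      have "(\<phi> has_real_derivative D) (at u within {0..1})"
        unfolding \<phi>_def D_def
        by (rule derivative_eq_intros a b refl | simp add: algebra_simps)+
      moreover have "at u within {0..1} = at u"
        by (rule at_within_interior) (use u in simp)
      ultimately have "(\<phi> has_real_derivative D) (at u)" by simp
      then have "((\<lambda>v. 0) has_real_derivative D) (at u)"
        by (rule has_field_derivative_transform_within_open[OF _ open_greaterThanLessThan u]) (rule orth)
      then have D0: "D = 0" using DERIV_unique DERIV_const by blast
      define SS where "SS = (\<gamma>u t u $ 1)\<^sup>2 + (\<gamma>u t u $ 2)\<^sup>2"
      define N where "N = \<gamma>uu t u $ 2 * \<gamma>u t u $ 1 - \<gamma>u t u $ 2 * \<gamma>uu t u $ 1"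
      have Gp: "G t u > 0" using Gpos[OF t0 u'] .
      have GS: "G t u = sqrt SS" unfolding G_def gnorm_def SS_def by simp
      have SSp: "SS > 0" using Gp GS by simp
      have SSG: "SS = (G t u)\<^sup>2" using GS SSp by simp
      have "K t u = N / (SS powr (3/2))"
        unfolding K_def kcurv_def N_def SS_def ..
      then have "K t u = N / (SS * G t u)" using powr32[OF SSp] GS by simp
      then have KN: "K t u * (SS * G t u) = N" using SSp Gp by simp
      have "fx t u = (\<gamma>u t u $ 1 * \<gamma>ut t u $ 1 + \<gamma>u t u $ 2 * \<gamma>ut t u $ 2) / G t u"
        unfolding fx_def ..
      also have "\<dots> = - (\<gamma>uu t u $ 1 * \<gamma>t t u $ 1 + \<gamma>uu t u $ 2 * \<gamma>t t u $ 2) / G t u"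
        using D0 unfolding D_def by (simp add: algebra_simps)
      also have "\<dots> = - ((K t u - c) * N / (G t u)\<^sup>2)"
        unfolding N_def conjunct1[OF e12[OF u]] conjunct2[OF e12[OF u]]
        using Gp by (simp add: field_simps power2_eq_square)
      also have "\<dots> = - ((K t u - c) * K t u * G t u)"
        unfolding KN[symmetric] SSG using Gp by (simp add: field_simps power2_eq_square)
      finally show ?thesis .
    qed
    have "integral {0..1} (fx t) = integral {0..1} (\<lambda>u. - ((K t u - c) * K t u * G t u))"
      by (rule integral_spike[of "{0,1}"]) (use pt in auto)
    also have "\<dots> \<le> 0"
    proof -
      define Q where "Q = integral {0..1} (\<lambda>u. (K t u - c)\<^sup>2 * G t u)"
      have iG: "(G t has_integral L) {0..1}" unfolding L_def
        using Gcont[OF t0] by (auto intro!: integrable_integral integrable_continuous_interval)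
      have iB: "((\<lambda>u. K t u * G t u) has_integral B) {0..1}" unfolding B_def
        using Gcont[OF t0] Kcont by (auto intro!: integrable_integral integrable_continuous_interval continuous_intros)
      have iQ: "((\<lambda>u. (K t u - c)\<^sup>2 * G t u) has_integral Q) {0..1}" unfolding Q_def
        using Gcont[OF t0] Kcont by (auto intro!: integrable_integral integrable_continuous_interval continuous_intros)
      have Q0: "Q \<ge> 0"
      proof (rule has_integral_nonneg[OF iQ])
        fix x assume "x \<in> {0..1::real}"
        then have "G t x > 0" using Gpos[OF t0] by auto
        then show "0 \<le> (K t x - c)\<^sup>2 * G t x" by simp
      qed
      have "((\<lambda>u. (K t u - c)\<^sup>2 * G t u + c * (K t u * G t u) - c * c * G t u) has_integral (Q + c * B - c * c * L)) {0..1}"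
        by (intro has_integral_diff has_integral_add has_integral_mult_right iQ iB iG)
      moreover have "Q + c * B - c * c * L = Q" unfolding c_def using Lpos by (simp add: field_simps)
      moreover have "(\<lambda>u. (K t u - c)\<^sup>2 * G t u + c * (K t u * G t u) - c * c * G t u) = (\<lambda>u. (K t u - c) * K t u * G t u)"
        by (rule ext) (simp add: algebra_simps power2_eq_square)
      ultimately have "((\<lambda>u. (K t u - c) * K t u * G t u) has_integral Q) {0..1}" by simp
      then have "((\<lambda>u. - ((K t u - c) * K t u * G t u)) has_integral - Q) {0..1}" by (rule has_integral_neg)
      then have "integral {0..1} (\<lambda>u. - ((K t u - c) * K t u * G t u)) = - Q" by (rule integral_unique)
      then show ?thesis using Q0 by linarith
    qed
    finally show ?thesis .
  qed
  show ?thesis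
  proof (intro ballI impI)
    fix s t assume st: "s \<in> {0..<T}" "t \<in> {0..<T}" "s \<le> t"
    have "integral {0..1} (G t) \<le> integral {0..1} (G s)"
    proof (rule DERIV_nonpos_imp_decreasing_open[OF st(3)])
      fix x assume x: "s < x" "x < t"
      then have x0: "x \<in> {0<..<T}" using st by auto
      have "at x within {0..<T} = at x"
        by (rule at_within_open_subset[OF x0]) auto
      then show "\<exists>y. ((\<lambda>t. integral {0..1} (G t)) has_real_derivative y) (at x) \<and> y \<le> 0"
        using dL[of x] Dle[OF x0] x0 by auto
    next
      show "continuous_on {s..t} (\<lambda>t. integral {0..1} (G t))"
        unfolding continuous_on_eq_continuous_within
      proof
        fix x assume "x \<in> {s..t}"
        then have x: "x \<in> {0..<T}" using st by auto
        have "continuous (at x within {0..<T}) (\<lambda>t. integral {0..1} (G t))"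
          by (rule DERIV_continuous[OF dL[OF x]])
        then show "continuous (at x within {s..t}) (\<lambda>t. integral {0..1} (G t))"
          by (rule continuous_within_subset) (use st in auto)
      qed
    qed
    then show "Lg (\<gamma> t) \<le> Lg (\<gamma> s)" using Lg_eq st by simp
  qed
qed
end
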